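(* Let $\pi\colon\mathcal{B}\to\mathcal{C}$ be a surjective open homomorphism of complete topological rings, let $I=\operatorname{Ker}(\pi)$ and let $\mathrm{e}\colon\mathcal{B}\to\mathcal{B}\{T\}$ be a restricted exponential homomorphism. Assume that $\mathrm{e}(I)\subseteq i_0(I)\mathcal{B}\{T\}$. Then there exists a unique restricted exponential homomorphism $\overline{\mathrm{e}}\colon\mathcal{C}\to\mathcal{C}\{T\}$ such that $\pi_T\circ\mathrm{e}=\overline{\mathrm{e}}\circ\pi$, where $\pi_T\colon\mathcal{B}\{T\}\to\mathcal{C}\{T\}$ is the unique homomorphism of topological $\mathcal{B}$-algebras mapping $T$ to $T$ (i.e. $\sum_ib_iT^i\mapsto\sum_i\pi(b_i)T^i$).
   Context: Conventions: topological rings are linearly topologized with a countable fundamental system of open ideals; homomorphisms are continuous; complete means the canonical map to $\varprojlim_{\mathfrak{a}}\mathcal{B}/\mathfrak{a}$ (open ideals, discrete quotients) is a topological isomorphism. For complete $\mathcal{B}$, $\mathcal{B}\{T\}$, $\mathcal{B}\{T,T'\}$ denote restricted power series (coefficients converging to $0$), topologized by the ideals of series with all coefficients in a given open ideal; $i_0\colon\mathcal{B}\to\mathcal{B}\{T\}$ is the inclusion as constant series, and $i_0(I)\mathcal{B}\{T\}$ is the ideal generated by the constant series in $I$. A restricted exponential homomorphism is a continuous ring homomorphism $\mathrm{e}\colon\mathcal{B}\to\mathcal{B}\{T\}$, $\mathrm{e}(b)=\sum_i\mathrm{e}_i(b)T^i$, with $\mathrm{e}_0=\mathrm{id}$ and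 $\sum_{i,j}\mathrm{e}_j(\mathrm{e}_i(b))T'^jT^i=\sum_\ell\mathrm{e}_\ell(b)(T+T')^\ell$ for all $b$. *)

theory Defs
  imports Main
begin

text \<open>A topological ring is a commutative ring (the whole type) together with a
  decreasing sequence N of ideals forming a countable fundamental system of open
  ideals; the open ideals are exactly the ideals containing some N n.\<close>

definition is_ideal :: "'a::comm_ring_1 set \<Rightarrow> bool" where
  "is_ideal I \<longleftrightarrow> 0 \<in> I \<and> (\<forall>x\<in>I. \<forall>y\<in>I. x + y \<in> I) \<and> (\<forall>x\<in>I. \<forall>r. r * x \<in> I)"

definition lin_top :: "(nat \<Rightarrow> 'a::comm_ring_1 set) \<Rightarrow> bool" where
  "lin_top N \<longleftrightarrow> (\<forall>n. is_ideal (N n)) \<and> (\<forall>n. N (Suc n) \<subseteq> N n)"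

text \<open>Complete: the canonical map to the inverse limit of the discrete quotients
  B/N n is bijective (this limit is cofinal in the limit over all open ideals;
  the inverse map is then automatically continuous).  Injective = separated,
  surjective = every compatible system of residues has a lift.\<close>

definition complete_lt :: "(nat \<Rightarrow> 'a::comm_ring_1 set) \<Rightarrow> bool" where
  "complete_lt N \<longleftrightarrow> (\<Inter>n. N n) = {0} \<and>
     (\<forall>x::nat \<Rightarrow> 'a. (\<forall>n. x (Suc n) - x n \<in> N n) \<longrightarrow> (\<exists>b. \<forall>n. b - x n \<in> N n))"

definition ring_hom_t :: "('a::comm_ring_1 \<Rightarrow> 'b::comm_ring_1) \<Rightarrow> bool" where
  "ring_hom_t f \<longleftrightarrow> f 1 = 1 \<and> (\<forall>x y. f (x + y) = f x + f y) \<and> (\<forall>x y. f (x * y) = f x * f y)"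

definition cont_hom :: "(nat \<Rightarrow> 'a::comm_ring_1 set) \<Rightarrow> (nat \<Rightarrow> 'b::comm_ring_1 set) \<Rightarrow> ('a \<Rightarrow> 'b) \<Rightarrow> bool" where
  "cont_hom N M f \<longleftrightarrow> ring_hom_t f \<and> (\<forall>n. \<exists>m. f ` N m \<subseteq> M n)"

definition open_map_t :: "(nat \<Rightarrow> 'a::comm_ring_1 set) \<Rightarrow> (nat \<Rightarrow> 'b::comm_ring_1 set) \<Rightarrow> ('a \<Rightarrow> 'b) \<Rightarrow> bool" where
  "open_map_t N M f \<longleftrightarrow> (\<forall>n. \<exists>m. M m \<subseteq> f ` N n)"

text \<open>Power series in T are coefficient sequences; restricted = coefficients tend to 0.\<close>
definition rps :: "(nat \<Rightarrow> 'a::comm_ring_1 set) \<Rightarrow> (nat \<Rightarrow> 'a) \<Rightarrow> bool" where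
  "rps N a \<longleftrightarrow> (\<forall>n. \<forall>\<^sub>F i in sequentially. a i \<in> N n)"

definition ps_const :: "'a::comm_ring_1 \<Rightarrow> nat \<Rightarrow> 'a" where
  "ps_const c = (\<lambda>i. if i = 0 then c else 0)"

definition ps_add :: "(nat \<Rightarrow> 'a::comm_ring_1) \<Rightarrow> (nat \<Rightarrow> 'a) \<Rightarrow> nat \<Rightarrow> 'a" where
  "ps_add a b = (\<lambda>i. a i + b i)"

definition ps_mult :: "(nat \<Rightarrow> 'a::comm_ring_1) \<Rightarrow> (nat \<Rightarrow> 'a) \<Rightarrow> nat \<Rightarrow> 'a" where
  "ps_mult a b = (\<lambda>k. \<Sum>i\<le>k. a i * b (k - i))"

text \<open>Restricted exponential homomorphism, e b i = e_i(b).  The identity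
  sum_{i,j} e_j(e_i b) T'^j T^i = sum_l e_l(b) (T+T')^l in B{T,T'} is written
  coefficientwise: the coefficient of T^i T'^j on the right is (i+j choose i) e_{i+j}(b).\<close>
definition restricted_exp :: "(nat \<Rightarrow> 'a::comm_ring_1 set) \<Rightarrow> ('a \<Rightarrow> nat \<Rightarrow> 'a) \<Rightarrow> bool" where
  "restricted_exp N e \<longleftrightarrow>
     (\<forall>b. rps N (e b)) \<and>
     e 1 = ps_const 1 \<and>
     (\<forall>x y. e (x + y) = ps_add (e x) (e y)) \<and>
     (\<forall>x y. e (x * y) = ps_mult (e x) (e y)) \<and>
     (\<forall>n. \<exists>m. \<forall>b\<in>N m. \<forall>i. e b i \<in> N n) \<and>
     (\<forall>b. e b 0 = b) \<and>
     (\<forall>b i j. e (e b i) j = of_nat ((i + j) choose i) * e b (i + j))"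

definition const_ideal :: "(nat \<Rightarrow> 'a::comm_ring_1 set) \<Rightarrow> 'a set \<Rightarrow> (nat \<Rightarrow> 'a) set" where
  "const_ideal N I = {a. \<exists>(m::nat) c f. (\<forall>k<m. c k \<in> I \<and> rps N (f k)) \<and>
                                a = (\<lambda>i. \<Sum>k<m. c k * f k i)}"

end

theory Submission
  imports Defs
begin

lemma hom_basics:
  assumes "ring_hom_t f"
  shows "f 0 = 0" "f (x - y) = f x - f y" "f (x * y) = f x * f y" "f (x + y) = f x + f y"
    "f (sum g A) = (\<Sum>a\<in>A. f (g a))" "f (of_nat n) = of_nat n" "f 1 = 1"
proof -
  have add: "\<And>x y. f (x + y) = f x + f y" and mul: "\<And>x y. f (x * y) = f x * f y"
    and one: "f 1 = 1" using assms unfolding ring_hom_t_def by auto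
  have z: "f 0 = 0" using add[of 0 0] by simp
  show "f 0 = 0" by (rule z)
  show "f (x - y) = f x - f y" using add[of "x - y" y] by (simp add: algebra_simps)
  show "f (x * y) = f x * f y" "f (x + y) = f x + f y" "f 1 = 1" using add mul one by auto
  show "f (sum g A) = (\<Sum>a\<in>A. f (g a))"
    by (induction A rule: infinite_finite_induct) (auto simp: z add)
  show "f (of_nat n) = of_nat n"
    by (induction n) (auto simp: z add one)
qed

theorem proposition2p7:
  fixes \<pi> :: "'b::comm_ring_1 \<Rightarrow> 'c::comm_ring_1"
    and NB :: "nat \<Rightarrow> 'b set" and NC :: "nat \<Rightarrow> 'c set"
    and e :: "'b \<Rightarrow> nat \<Rightarrow> 'b"
  assumes "lin_top NB" and "lin_top NC"
    and "complete_lt NB" and "complete_lt NC"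
    and "cont_hom NB NC \<pi>" and "surj \<pi>" and "open_map_t NB NC \<pi>"
    and "restricted_exp NB e"
    and "\<forall>b. \<pi> b = 0 \<longrightarrow> e b \<in> const_ideal NB {b. \<pi> b = 0}"
  shows "\<exists>!ee. restricted_exp NC ee \<and> (\<forall>b. (\<lambda>i. \<pi> (e b i)) = ee (\<pi> b))"
proof -
  have hom: "ring_hom_t \<pi>" using assms(5) unfolding cont_hom_def by auto
  note H = hom_basics[OF hom]
  have RE: "\<forall>b. rps NB (e b)" "e 1 = ps_const 1" "\<forall>x y. e (x + y) = ps_add (e x) (e y)"
     "\<forall>x y. e (x * y) = ps_mult (e x) (e y)" "\<forall>n. \<exists>m. \<forall>b\<in>NB m. \<forall>i. e b i \<in> NB n"
     "\<forall>b. e b 0 = b" "\<forall>b i j. e (e b i) j = of_nat ((i + j) choose i) * e b (i + j)"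
    using assms(8) unfolding restricted_exp_def by auto
  have esub: "e (x - y) i = e x i - e y i" for x y i
  proof -
    have "e x = ps_add (e (x - y)) (e y)" using RE(3)[rule_format, of "x - y" y] by simp
    then have "e x i = e (x - y) i + e y i" unfolding ps_add_def by metis
    then show ?thesis by (simp add: algebra_simps)
  qed
  have ker: "\<pi> (e b i) = 0" if pb: "\<pi> b = 0" for b i
  proof -
    obtain m :: nat and c f where cf: "\<forall>k<m. \<pi> (c k) = 0"
      and eq: "e b = (\<lambda>i. \<Sum>k<m. c k * f k i)"
    proof -
      have "e b \<in> const_ideal NB {b. \<pi> b = 0}" using assms(9) pb by blast
      then obtain m :: nat and c f where "\<forall>k<m. c k \<in> {b. \<pi> b = 0} \<and> rps NB (f k)" 
          "e b = (\<lambda>i. \<Sum>k<m. c k * f k i)"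
        unfolding const_ideal_def by blast
      then show ?thesis using that[of m c f] by auto
    qed
    have "\<pi> (e b i) = (\<Sum>k<m. \<pi> (c k) * \<pi> (f k i))" by (simp add: eq H)
    also have "\<dots> = 0" using cf by simp
    finally show ?thesis .
  qed
  have wd: "\<pi> (e b i) = \<pi> (e b' i)" if "\<pi> b = \<pi> b'" for b b' i
  proof -
    have "\<pi> (b - b') = 0" using that by (simp add: H)
    then have "\<pi> (e (b - b') i) = 0" by (rule ker)
    then show ?thesis by (simp add: esub H)
  qed
  define ee where "ee c = (\<lambda>i. \<pi> (e (inv \<pi> c) i))" for c
  have eeb: "ee (\<pi> b) = (\<lambda>i. \<pi> (e b i))" for b
    unfolding ee_def using assms(6) by (auto intro!: wd simp: surj_f_inv_f)
  have pre: "\<exists>b. c = \<pi> b" for c using assms(6) by auto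
  have "restricted_exp NC ee"
    unfolding restricted_exp_def
  proof (intro conjI allI)
    fix c show "rps NC (ee c)" unfolding rps_def
    proof
      fix n
      obtain b where b: "c = \<pi> b" using pre by blast
      obtain m where m: "\<pi> ` NB m \<subseteq> NC n" using assms(5) unfolding cont_hom_def by blast
      have "\<forall>\<^sub>F i in sequentially. e b i \<in> NB m" using RE(1) unfolding rps_def by blast
      then show "\<forall>\<^sub>F i in sequentially. ee c i \<in> NC n"
        by eventually_elim (use m b eeb in auto)
    qed
  next
    show "ee 1 = ps_const 1" using eeb[of 1] RE(2) H by (auto simp: ps_const_def)
  next
    fix x y :: 'c
    obtain a b where "x = \<pi> a" "y = \<pi> b" using pre by blast
    then show "ee (x + y) = ps_add (ee x) (ee y)"
      using eeb[of "a + b"] eeb[of a] eeb[of b] RE(3) H by (auto simp: ps_add_def)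
  next
    fix x y :: 'c
    obtain a b where "x = \<pi> a" "y = \<pi> b" using pre by blast
    then show "ee (x * y) = ps_mult (ee x) (ee y)"
      using eeb[of "a * b"] eeb[of a] eeb[of b] RE(4) by (auto simp: ps_mult_def H)
  next
    fix n
    obtain m1 where m1: "\<pi> ` NB m1 \<subseteq> NC n" using assms(5) unfolding cont_hom_def by blast
    obtain m2 where m2: "\<forall>b\<in>NB m2. \<forall>i. e b i \<in> NB m1" using RE(5) by blast
    obtain m3 where m3: "NC m3 \<subseteq> \<pi> ` NB m2" using assms(7) unfolding open_map_t_def by blast
    show "\<exists>m. \<forall>b\<in>NC m. \<forall>i. ee b i \<in> NC n"
    proof (intro exI ballI allI)
      fix c i assume "c \<in> NC m3"
      then obtain b where "b \<in> NB m2" "c = \<pi> b" using m3 by blast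
      then show "ee c i \<in> NC n" using m1 m2 eeb by auto
    qed
  next
    fix c :: 'c
    obtain b where "c = \<pi> b" using pre by blast
    then show "ee c 0 = c" using eeb RE(6) by simp
  next
    fix c :: 'c and i j
    obtain b where b: "c = \<pi> b" using pre by blast
    have "ee c i = \<pi> (e b i)" using b eeb by simp
    then have "ee (ee c i) j = \<pi> (e (e b i) j)" using eeb by simp
    also have "\<dots> = of_nat ((i + j) choose i) * \<pi> (e b (i + j))" using RE(7) H by simp
    finally show "ee (ee c i) j = of_nat ((i + j) choose i) * ee c (i + j)" using b eeb by simp
  qed
  show ?thesis
  proof (rule ex1I[of _ ee])
    show "restricted_exp NC ee \<and> (\<forall>b. (\<lambda>i. \<pi> (e b i)) = ee (\<pi> b))" using \<open>restricted_exp NC ee\<close> eeb by simp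
  next
    fix ee' assume a: "restricted_exp NC ee' \<and> (\<forall>b. (\<lambda>i. \<pi> (e b i)) = ee' (\<pi> b))"
    show "ee' = ee"
    proof
      fix c obtain b where "c = \<pi> b" using pre by blast
      then show "ee' c = ee c" using a eeb by simp
    qed
  qed
qed

end
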